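(* Let $n\in\mathbb{N}$, let $A\subset\mathbb{R}$, let $a\in\mathbb{R}$ with $a\notin\overline{A}$ (the closure of $A$), and let $f:A\cup\{a\}\to\mathbb{R}$. Suppose that for every $k\in\{1,\dots,n\}$ the set $\{[x_1,\dots,x_k;f] : x_1,\dots,x_k\in A \text{ pairwise distinct}\}$ is bounded. Then for every $k\in\{1,\dots,n\}$ the set $\{[x_1,\dots,x_k;f] : x_1,\dots,x_k\in A\cup\{a\} \text{ pairwise distinct}\}$ is bounded.
   Context: For a function $f$ and pairwise distinct points $x_1,\dots,x_m$ of its domain, divided differences are defined recursively by $[x_1;f]:=f(x_1)$ and $[x_1,\dots,x_{m+1};f]:=\dfrac{[x_2,\dots,x_{m+1};f]-[x_1,\dots,x_m;f]}{x_{m+1}-x_1}$; they are symmetric functions of the points. *)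

theory Defs
  imports "HOL-Analysis.Analysis"
begin

text \<open>The empty list is given the junk value 0 (never used).\<close>
function divdiff :: "real list \<Rightarrow> (real \<Rightarrow> real) \<Rightarrow> real" where
  "divdiff [] f = 0"
| "divdiff [x] f = f x"
| "divdiff (x # y # ys) f =
     (divdiff (y # ys) f - divdiff (butlast (x # y # ys)) f) / (last (y # ys) - x)"
  by pat_completeness auto
termination
  by (relation "Wellfounded.measure (\<lambda>(xs, f). length xs)") auto

definition divdiff_set :: "nat \<Rightarrow> real set \<Rightarrow> (real \<Rightarrow> real) \<Rightarrow> real set" where
  "divdiff_set k S f = {divdiff xs f | xs. length xs = k \<and> distinct xs \<and> set xs \<subseteq> S}"

end

theory Submission
  imports Defs
begin

definition dd :: "real set \<Rightarrow> (real \<Rightarrow> real) \<Rightarrow> real" where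
  "dd T f = (\<Sum>u\<in>T. f u / (\<Prod>y\<in>T-{u}. u - y))"

lemma dd_key:
  assumes S: "finite S" "x \<notin> S" "z \<notin> S" "x \<noteq> z"
  shows "dd (insert x (insert z S)) f * (z - x) = dd (insert z S) f - dd (insert x S) f"
proof -
  define P where "P u = (\<Prod>y\<in>S-{u}. u - y)" for u
  have Pnz: "P u \<noteq> 0" for u using S by (simp add: P_def)
  have e1: "(\<Prod>y\<in>insert x (insert z S)-{u}. u - y) = (u-x)*((u-z)* P u)" if "u \<in> S" for u
  proof -
    have "insert x (insert z S)-{u} = insert x (insert z (S-{u}))" using that S by auto
    thus ?thesis using S by (simp add: P_def)
  qed
  have e2: "(\<Prod>y\<in>insert z S-{u}. u - y) = (u-z)* P u" if "u \<in> S" for u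
  proof -
    have "insert z S-{u} = insert z (S-{u})" using that S by auto
    thus ?thesis using S by (simp add: P_def)
  qed
  have e3: "(\<Prod>y\<in>insert x S-{u}. u - y) = (u-x)* P u" if "u \<in> S" for u
  proof -
    have "insert x S-{u} = insert x (S-{u})" using that S by auto
    thus ?thesis using S by (simp add: P_def)
  qed
  have px: "(\<Prod>y\<in>insert x (insert z S)-{x}. x - y) = (x-z)*(\<Prod>y\<in>S. x - y)"
  proof -
    have "insert x (insert z S)-{x} = insert z S" using S by auto
    thus ?thesis using S by simp
  qed
  have pz: "(\<Prod>y\<in>insert x (insert z S)-{z}. z - y) = (z-x)*(\<Prod>y\<in>S. z - y)"
  proof -
    have "insert x (insert z S)-{z} = insert x S" using S by auto
    thus ?thesis using S by simp
  qed
  have pz2: "(\<Prod>y\<in>insert z S-{z}. z - y) = (\<Prod>y\<in>S. z - y)"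
  proof -
    have "insert z S-{z} = S" using S by auto
    thus ?thesis by simp
  qed
  have px2: "(\<Prod>y\<in>insert x S-{x}. x - y) = (\<Prod>y\<in>S. x - y)"
  proof -
    have "insert x S-{x} = S" using S by auto
    thus ?thesis by simp
  qed
  have nzx: "(\<Prod>y\<in>S. x - y) \<noteq> 0" using S by auto
  have nzz: "(\<Prod>y\<in>S. z - y) \<noteq> 0" using S by auto
  have sumT: "(\<Sum>u\<in>S. f u / (\<Prod>y\<in>insert x (insert z S)-{u}. u - y)) * (z - x)
      = (\<Sum>u\<in>S. f u / (\<Prod>y\<in>insert z S-{u}. u - y)) - (\<Sum>u\<in>S. f u / (\<Prod>y\<in>insert x S-{u}. u - y))"
  proof -
    have "(\<Sum>u\<in>S. f u / (\<Prod>y\<in>insert x (insert z S)-{u}. u - y)) * (z - x)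
        = (\<Sum>u\<in>S. f u / (\<Prod>y\<in>insert x (insert z S)-{u}. u - y) * (z - x))"
      by (simp add: sum_distrib_right)
    also have "\<dots> = (\<Sum>u\<in>S. f u / (\<Prod>y\<in>insert z S-{u}. u - y) - f u / (\<Prod>y\<in>insert x S-{u}. u - y))"
    proof (rule sum.cong[OF refl])
      fix u assume u: "u \<in> S"
      have "u \<noteq> x" "u \<noteq> z" using u S by auto
      then show "f u / (\<Prod>y\<in>insert x (insert z S)-{u}. u - y) * (z - x)
         = f u / (\<Prod>y\<in>insert z S-{u}. u - y) - f u / (\<Prod>y\<in>insert x S-{u}. u - y)"
      proof -
        have nz: "u - x \<noteq> 0" "u - z \<noteq> 0" using \<open>u \<noteq> x\<close> \<open>u \<noteq> z\<close> by auto
        have g: "\<And>F p. p \<noteq> 0 \<Longrightarrow> F / ((u-x)*((u-z)*p)) * (z-x) = F/((u-z)*p) - F/((u-x)*p)"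
          using nz by (simp add: divide_simps) (simp add: algebra_simps)
        show ?thesis unfolding e1[OF u] e2[OF u] e3[OF u]
          using g Pnz[of u] by blast
      qed
    qed
    also have "\<dots> = (\<Sum>u\<in>S. f u / (\<Prod>y\<in>insert z S-{u}. u - y)) - (\<Sum>u\<in>S. f u / (\<Prod>y\<in>insert x S-{u}. u - y))" by (simp add: sum_subtractf)
    finally show ?thesis .
  qed
  have "dd (insert x (insert z S)) f * (z - x) =
     (f x / (\<Prod>y\<in>insert x (insert z S)-{x}. x - y) + f z / (\<Prod>y\<in>insert x (insert z S)-{z}. z - y)
      + (\<Sum>u\<in>S. f u / (\<Prod>y\<in>insert x (insert z S)-{u}. u - y))) * (z - x)"
    unfolding dd_def using S by (simp add: add.assoc)
  also have "\<dots> = (f z / (\<Prod>y\<in>insert z S-{z}. z - y) + (\<Sum>u\<in>S. f u / (\<Prod>y\<in>insert z S-{u}. u - y)))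
     - (f x / (\<Prod>y\<in>insert x S-{x}. x - y) + (\<Sum>u\<in>S. f u / (\<Prod>y\<in>insert x S-{u}. u - y)))"
  proof -
    have g: "\<And>(X::real) Z s1 s2 s3 a b. X \<noteq> 0 \<Longrightarrow> Z \<noteq> 0 \<Longrightarrow> s1 * (z - x) = s2 - s3 \<Longrightarrow>
       (a / ((x-z)*X) + b / ((z-x)*Z) + s1) * (z - x) = (b / Z + s2) - (a / X + s3)"
    proof -
      fix X Z s1 s2 s3 a b :: real
      assume h: "X \<noteq> 0" "Z \<noteq> 0" "s1 * (z - x) = s2 - s3"
      have zx: "z - x \<noteq> 0" "x - z \<noteq> 0" using S by auto
      have "(a / ((x-z)*X) + b / ((z-x)*Z) + s1) * (z - x) = a / ((x-z)*X) * (z-x) + b / ((z-x)*Z) * (z-x) + s1 * (z-x)"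
        by (simp add: distrib_right)
      also have "a / ((x-z)*X) * (z-x) = - (a / X)" using zx h
        by (simp add: divide_simps) (simp add: algebra_simps)
      also have "b / ((z-x)*Z) * (z-x) = b / Z" using zx h by (simp add: divide_simps)
      finally show "(a / ((x-z)*X) + b / ((z-x)*Z) + s1) * (z - x) = (b / Z + s2) - (a / X + s3)"
        using h by simp
    qed
    show ?thesis unfolding px pz pz2 px2 by (rule g[OF nzx nzz sumT])
  qed
  also have "\<dots> = dd (insert z S) f - dd (insert x S) f"
    unfolding dd_def using S by simp
  finally show ?thesis .
qed

lemma divdiff_dd: "distinct xs \<Longrightarrow> xs \<noteq> [] \<Longrightarrow> divdiff xs f = dd (set xs) f"
proof (induction xs f rule: divdiff.induct)
  case (1 f) then show ?case by simp
next
  case (2 x f) then show ?case by (simp add: dd_def)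
next
  case (3 x y ys f)
  define z where "z = last (y#ys)"
  define m where "m = butlast (y#ys)"
  have yy: "y#ys = m @ [z]" unfolding z_def m_def by simp
  have bl: "butlast (x#y#ys) = x # m" unfolding m_def by simp
  have d: "distinct (x # m @ [z])" using 3(3) yy by simp
  have IH1: "divdiff (y#ys) f = dd (insert z (set m)) f"
    using 3(1) 3(3) yy by simp
  have IH2: "divdiff (butlast (x#y#ys)) f = dd (insert x (set m)) f"
    using 3(2) 3(3) bl d by simp
  have xz: "x \<noteq> z" using d by auto
  have key: "dd (insert x (insert z (set m))) f * (z - x) = dd (insert z (set m)) f - dd (insert x (set m)) f"
    by (rule dd_key) (use d in auto)
  have "set (x#y#ys) = insert x (insert z (set m))" using yy by (simp add: insert_commute)
  have "divdiff (x#y#ys) f = (dd (insert z (set m)) f - dd (insert x (set m)) f) / (z - x)"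
    using IH1 IH2 by (simp only: divdiff.simps z_def)
  also have "\<dots> = dd (insert x (insert z (set m))) f" using key xz
    by (simp add: field_simps)
  finally show ?case using \<open>set (x#y#ys) = _\<close> by simp
qed

theorem lemma1:
  fixes n :: nat and A :: "real set" and a :: real and f :: "real \<Rightarrow> real"
  assumes "a \<notin> closure A"
    and "\<forall>k\<in>{1..n}. bounded (divdiff_set k A f)"
  shows "\<forall>k\<in>{1..n}. bounded (divdiff_set k (A \<union> {a}) f)"
proof -
  obtain e where e: "e > 0" "\<And>b. b \<in> A \<Longrightarrow> e \<le> \<bar>b - a\<bar>"
  proof -
    have "open (- closure A)" by auto
    then obtain e where "e > 0" "ball a e \<subseteq> - closure A"
      using assms(1) open_contains_ball by blast
    moreover have "e \<le> \<bar>b - a\<bar>" if "b \<in> A" "ball a e \<subseteq> - closure A" for b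
    proof (rule ccontr)
      assume "\<not> ?thesis"
      then have "b \<in> ball a e" by (simp add: dist_real_def abs_minus_commute)
      then show False using that closure_subset by blast
    qed
    ultimately show ?thesis using that by blast
  qed
  have MA: "\<exists>M. \<forall>xs. length xs = k \<and> distinct xs \<and> set xs \<subseteq> A \<longrightarrow> \<bar>divdiff xs f\<bar> \<le> M"
    if "1 \<le> k" "k \<le> n" for k
  proof -
    have "bounded (divdiff_set k A f)" using assms(2) that by auto
    then obtain M where "\<forall>x\<in>divdiff_set k A f. norm x \<le> M" unfolding bounded_iff by blast
    then show ?thesis unfolding divdiff_set_def by auto
  qed
  have main: "1 \<le> k \<longrightarrow> k \<le> n \<longrightarrow> (\<exists>B. \<forall>xs. length xs = k \<and> distinct xs \<and> set xs \<subseteq> A \<union> {a} \<longrightarrow> \<bar>divdiff xs f\<bar> \<le> B)" for k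
  proof (induction k)
    case 0 then show ?case by simp
  next
    case (Suc k)
    show ?case
    proof (intro impI)
      assume k1: "1 \<le> Suc k" and kn: "Suc k \<le> n"
      obtain M1 where M1: "\<And>xs. length xs = Suc k \<Longrightarrow> distinct xs \<Longrightarrow> set xs \<subseteq> A \<Longrightarrow> \<bar>divdiff xs f\<bar> \<le> M1"
        using MA[OF k1 kn] by blast
      show "\<exists>B. \<forall>xs. length xs = Suc k \<and> distinct xs \<and> set xs \<subseteq> A \<union> {a} \<longrightarrow> \<bar>divdiff xs f\<bar> \<le> B"
      proof (cases "k = 0")
        case True
        show ?thesis
        proof (intro exI[of _ "max M1 \<bar>f a\<bar>"] allI impI)
          fix xs assume xs: "length xs = Suc k \<and> distinct xs \<and> set xs \<subseteq> A \<union> {a}"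
          then obtain x where x: "xs = [x]" using True by (cases xs) auto
          show "\<bar>divdiff xs f\<bar> \<le> max M1 \<bar>f a\<bar>"
          proof (cases "x = a")
            case True then show ?thesis using x by simp
          next
            case False
            then have "set xs \<subseteq> A" using xs x by auto
            then show ?thesis using M1 xs by fastforce
          qed
        qed
      next
        case False
        then have k1': "1 \<le> k" by simp
        obtain Mk where Mk: "\<And>xs. length xs = k \<Longrightarrow> distinct xs \<Longrightarrow> set xs \<subseteq> A \<Longrightarrow> \<bar>divdiff xs f\<bar> \<le> Mk"
          using MA[OF k1'] kn by fastforce
        obtain Bk where Bk: "\<And>xs. length xs = k \<Longrightarrow> distinct xs \<Longrightarrow> set xs \<subseteq> A \<union> {a} \<Longrightarrow> \<bar>divdiff xs f\<bar> \<le> Bk"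
          using Suc.IH k1' kn by fastforce
        show ?thesis
        proof (intro exI[of _ "max M1 ((Mk + Bk) / e)"] allI impI)
          fix xs assume xs: "length xs = Suc k \<and> distinct xs \<and> set xs \<subseteq> A \<union> {a}"
          show "\<bar>divdiff xs f\<bar> \<le> max M1 ((Mk + Bk) / e)"
          proof (cases "a \<in> set xs")
            case False
            then have "set xs \<subseteq> A" using xs by auto
            then show ?thesis using M1 xs by fastforce
          next
            case True
            have cs: "card (set xs) = Suc k" using xs distinct_card by metis
            have "set xs - {a} \<noteq> {}"
            proof
              assume "set xs - {a} = {}"
              then have "set xs = {a}" using True by auto
              then show False using cs False by simp
            qed
            then obtain b where b: "b \<in> set xs" "b \<noteq> a" by auto
            define R where "R = set xs - {a, b}"
            define r where "r = sorted_list_of_set R"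
            have fR: "finite R" unfolding R_def by simp
            have sr: "set r = R" "distinct r" unfolding r_def using fR by auto
            have sx: "set xs = insert a (insert b R)" using True b unfolding R_def by auto
            have aR: "a \<notin> R" "b \<notin> R" unfolding R_def by auto
            have cR: "card R = k - 1"
              using cs sx aR b fR by (simp add: card_insert_if)
            have lr: "length r = k - 1" using sr cR distinct_card by metis
            have bA: "b \<in> A" using b xs by auto
            have RA: "R \<subseteq> A" using xs unfolding R_def by auto
            have l1: "\<bar>divdiff (r @ [b]) f\<bar> \<le> Mk"
              by (rule Mk) (use lr k1' sr aR bA RA in auto)
            have l2: "\<bar>divdiff (a # r) f\<bar> \<le> Bk"
              by (rule Bk) (use lr k1' sr aR RA in auto)
            have d1: "divdiff (r @ [b]) f = dd (insert b R) f"
              using divdiff_dd[of "r @ [b]" f] sr aR by simp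
            have d2: "divdiff (a # r) f = dd (insert a R) f"
              using divdiff_dd[of "a # r" f] sr aR by simp
            have d3: "divdiff xs f = dd (set xs) f"
              using divdiff_dd[of xs f] xs True by (cases xs) auto
            have key: "dd (insert a (insert b R)) f * (b - a) = dd (insert b R) f - dd (insert a R) f"
              by (rule dd_key) (use fR aR b in auto)
            have eb: "e \<le> \<bar>b - a\<bar>" using e(2) bA by simp
            have "\<bar>divdiff xs f\<bar> * \<bar>b - a\<bar> \<le> Mk + Bk"
              using key d1 d2 d3 sx l1 l2 abs_mult[of "divdiff xs f" "b - a"] by auto
            moreover have "\<bar>divdiff xs f\<bar> * e \<le> \<bar>divdiff xs f\<bar> * \<bar>b - a\<bar>"
              using eb by (simp add: mult_left_mono)
            ultimately have "\<bar>divdiff xs f\<bar> * e \<le> Mk + Bk" by linarith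
            then have "\<bar>divdiff xs f\<bar> \<le> (Mk + Bk) / e" using e(1) by (simp add: field_simps)
            then show ?thesis by simp
          qed
        qed
      qed
    qed
  qed
  show ?thesis
  proof
    fix k assume k: "k \<in> {1..n}"
    then obtain B where B: "\<forall>xs. length xs = k \<and> distinct xs \<and> set xs \<subseteq> A \<union> {a} \<longrightarrow> \<bar>divdiff xs f\<bar> \<le> B"
      using main[of k] by auto
    show "bounded (divdiff_set k (A \<union> {a}) f)"
      unfolding bounded_iff divdiff_set_def using B by auto
  qed
qed

end
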